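(* Let $p\in(1,\infty)$ and let $Y$ be a Banach space whose norm satisfies Rolewicz property $(\beta)$ with power type $p$. Then there exists $\gamma=\gamma(Y)>0$ such that for every non-contractive Lipschitz map $f\colon P^\omega_1\to Y$, $$\|f(r)-f(s)\|\le 3\left(\mathrm{Lip}(f)-\frac{\gamma}{\mathrm{Lip}(f)^{p-1}}\right).$$
   Context: For a Banach space $X$ with closed unit ball $B_X$ and a sequence $(y_n)_{n\ge1}$ in $X$, let $\mathrm{sep}[(y_n)]:=\inf\{\|y_m-y_n\|: m\neq n\}$. The $(\beta)$-modulus of the norm is $$\overline{\beta}_X(t):=1-\sup\Big\{\inf_{n\ge1}\tfrac{\|x+y_n\|}{2}\ :\ x\in B_X,\ (y_n)_{n\ge1}\subset B_X,\ \mathrm{sep}[(y_n)]\ge t\Big\},$$ and the norm satisfies property $(\beta)$ with power type $p$ if there is $c>0$ with $\overline{\beta}_X(t)\ge ct^p$ for all $t\in(0,2]$. The parasol graph $P^\omega_1$ has vertex set $\{r,b,s\}\cup\{t_i:i\ge1\}$ (all distinct) and edges $\{r,b\}$, $\{b,t_i\}$ and $\{t_i,s\}$ for every $i\ge1$; it carries the unweighted shortest-path metric $\rho$ (so $\rho(r,s)=3$). A map $f$ is non-contractive if $\|f(x)-f(y)\|\ge\rho(x,y)$ for all $x,y$; $\mathrm{Lip}(f)$ is its Lipschitz constant. *)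

theory Defs
  imports "HOL-Analysis.Analysis"
begin

definition sep :: "(nat \<Rightarrow> 'a::real_normed_vector) \<Rightarrow> real" where
  "sep y = Inf {norm (y m - y n) | m n. m \<noteq> n}"

text \<open>The supremum is taken over the given set together with 0;
  since every infimum in the set is nonnegative this does not change the supremum
  when the set is nonempty, and it fixes the convention sup of empty set = 0.\<close>
definition beta_bar :: "'a::real_normed_vector itself \<Rightarrow> real \<Rightarrow> real" where
  "beta_bar _ t = 1 - Sup (insert 0
     {(INF n. norm (x + y n) / 2) | (x::'a) y.
        norm x \<le> 1 \<and> (\<forall>n. norm (y n) \<le> 1) \<and> sep y \<ge> t})"

definition beta_power_type :: "'a::real_normed_vector itself \<Rightarrow> real \<Rightarrow> bool" where
  "beta_power_type T p \<longleftrightarrow> (\<exists>c>0. \<forall>t. 0 < t \<and> t \<le> 2 \<longrightarrow> beta_bar T t \<ge> c * t powr p)"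

datatype parasol = R | B | S | T nat

fun parasol_edge :: "parasol \<Rightarrow> parasol \<Rightarrow> bool" where
  "parasol_edge R B = True"
| "parasol_edge B R = True"
| "parasol_edge B (T i) = True"
| "parasol_edge (T i) B = True"
| "parasol_edge (T i) S = True"
| "parasol_edge S (T i) = True"
| "parasol_edge _ _ = False"

definition parasol_walk :: "parasol list \<Rightarrow> parasol \<Rightarrow> parasol \<Rightarrow> bool" where
  "parasol_walk ws x y \<longleftrightarrow> ws \<noteq> [] \<and> hd ws = x \<and> last ws = y \<and>
     (\<forall>i. Suc i < length ws \<longrightarrow> parasol_edge (ws ! i) (ws ! Suc i))"

definition rho :: "parasol \<Rightarrow> parasol \<Rightarrow> real" where
  "rho x y = real (LEAST n. \<exists>ws. parasol_walk ws x y \<and> length ws = Suc n)"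

definition noncontractive :: "(parasol \<Rightarrow> 'a::real_normed_vector) \<Rightarrow> bool" where
  "noncontractive f \<longleftrightarrow> (\<forall>x y. norm (f x - f y) \<ge> rho x y)"

definition parasol_lipschitz :: "(parasol \<Rightarrow> 'a::real_normed_vector) \<Rightarrow> bool" where
  "parasol_lipschitz f \<longleftrightarrow> (\<exists>L. \<forall>x y. norm (f x - f y) \<le> L * rho x y)"

definition Lip :: "(parasol \<Rightarrow> 'a::real_normed_vector) \<Rightarrow> real" where
  "Lip f = Sup {norm (f x - f y) / rho x y | x y. x \<noteq> y}"

end

theory Submission
  imports Defs
begin

lemma rho_walk_le:
  assumes "parasol_walk ws x y" "length ws = Suc k"
  shows "rho x y \<le> real k"
  unfolding rho_def using assms by (auto intro!: Least_le)

lemma rho_pos: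
  assumes "x \<noteq> y" "parasol_walk ws x y"
  shows "rho x y \<ge> 1"
proof -
  let ?P = "\<lambda>n. \<exists>ws. parasol_walk ws x y \<and> length ws = Suc n"
  have ex: "?P (length ws - 1)" using assms(2) unfolding parasol_walk_def
    by (intro exI[of _ ws]) auto
  have "?P (Least ?P)" using LeastI[of ?P, OF ex] .
  then obtain w where w: "parasol_walk w x y" "length w = Suc (Least ?P)" by blast
  have "Least ?P \<noteq> 0"
  proof
    assume "Least ?P = 0"
    then have "length w = 1" using w by simp
    then have "hd w = last w" by (cases w) auto
    then show False using w(1) assms(1) unfolding parasol_walk_def by simp
  qed
  then show ?thesis unfolding rho_def by simp
qed

lemma rho_TT:
  assumes "m \<noteq> n"
  shows "rho (T m) (T n) \<ge> 2"
proof -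
  let ?P = "\<lambda>k. \<exists>ws. parasol_walk ws (T m) (T n) \<and> length ws = Suc k"
  have ex: "?P 2" by (intro exI[of _ "[T m, B, T n]"])
      (auto simp: parasol_walk_def less_Suc_eq nth_Cons split: nat.splits)
  have "?P (Least ?P)" using LeastI[of ?P, OF ex] .
  then obtain w where w: "parasol_walk w (T m) (T n)" "length w = Suc (Least ?P)" by blast
  have "Least ?P \<noteq> 0"
  proof
    assume "Least ?P = 0"
    then have "length w = 1" using w by simp
    then have "hd w = last w" by (cases w) auto
    then show False using w(1) assms(1) unfolding parasol_walk_def by simp
  qed
  moreover have "Least ?P \<noteq> 1"
  proof
    assume "Least ?P = 1"
    then have "length w = 2" using w by simp
    then obtain a b where "w = [a, b]"
      by (cases w; cases "tl w") auto
    then show False using w(1) unfolding parasol_walk_def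
      by (auto elim!: allE[of _ 0])
  qed
  ultimately show ?thesis unfolding rho_def by simp
qed

lemma walk2: "parasol_edge x y \<Longrightarrow> parasol_walk [x, y] x y"
  by (auto simp: parasol_walk_def less_Suc_eq)

lemma rho_edge_le: "parasol_edge x y \<Longrightarrow> rho x y \<le> 1"
  using rho_walk_le[OF walk2] by fastforce

lemma rho_edge_ge: "parasol_edge x y \<Longrightarrow> x \<noteq> y \<Longrightarrow> rho x y \<ge> 1"
  using rho_pos[OF _ walk2] by blast

lemma Lip_bound:
  fixes f :: "parasol \<Rightarrow> 'a::real_normed_vector"
  assumes "parasol_lipschitz f" "x \<noteq> y" "rho x y > 0"
  shows "norm (f x - f y) / rho x y \<le> Lip f"
proof -
  obtain L where L: "\<forall>x y. norm (f x - f y) \<le> L * rho x y"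
    using assms(1) unfolding parasol_lipschitz_def by blast
  have "bdd_above {norm (f x - f y) / rho x y | x y. x \<noteq> y}"
  proof (rule bdd_aboveI)
    fix z assume "z \<in> {norm (f x - f y) / rho x y | x y. x \<noteq> y}"
    then obtain a b where z: "z = norm (f a - f b) / rho a b" by blast
    show "z \<le> max L 0"
    proof (cases "rho a b > 0")
      case True
      then have "z \<le> L" using L[rule_format, of a b] z
        by (simp add: divide_le_eq mult.commute)
      then show ?thesis by simp
    next
      case False
      then have "z \<le> 0" using z by (simp add: divide_nonneg_nonpos)
      then show ?thesis by simp
    qed
  qed
  then show ?thesis unfolding Lip_def using assms(2)
    by (intro cSup_upper) auto
qed

theorem lemma3:
  fixes p :: real
  assumes "1 < p"
    and "beta_power_type TYPE('a::banach) p"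
  shows "\<exists>\<gamma>>0. \<forall>f :: parasol \<Rightarrow> 'a.
           noncontractive f \<and> parasol_lipschitz f \<longrightarrow>
           norm (f R - f S) \<le> 3 * (Lip f - \<gamma> / Lip f powr (p - 1))"
proof -
  obtain c where c: "c > 0" "\<And>t. 0 < t \<Longrightarrow> t \<le> 2 \<Longrightarrow> beta_bar TYPE('a) t \<ge> c * t powr p"
    using assms(2) unfolding beta_power_type_def by blast
  define \<gamma> where "\<gamma> = c * 2 powr (p + 1) / 3"
  have "\<gamma> > 0" using c unfolding \<gamma>_def by simp
  moreover have "norm (f R - f S) \<le> 3 * (Lip f - \<gamma> / Lip f powr (p - 1))"
    if nc: "noncontractive f" and lf: "parasol_lipschitz f" for f :: "parasol \<Rightarrow> 'a"
  proof -
    define L where "L = Lip f"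
    have eRB: "parasol_edge R B" and eBT: "\<And>n. parasol_edge B (T n)"
      and eTS: "\<And>n. parasol_edge (T n) S" by auto
    have ub: "norm (f x - f y) \<le> L" if "parasol_edge x y" "x \<noteq> y" for x y
    proof -
      have r1: "rho x y = 1" using rho_edge_le[OF that(1)] rho_edge_ge[OF that] by simp
      show ?thesis using Lip_bound[OF lf that(2)] r1 unfolding L_def by simp
    qed
    have "1 \<le> L"
    proof -
      have r1: "rho R B = 1" using rho_edge_le[OF eRB] rho_edge_ge[OF eRB] by simp
      have "rho R B \<le> norm (f R - f B)" using nc unfolding noncontractive_def by blast
      then show ?thesis using ub[OF eRB] r1 by simp
    qed
    then have Lpos: "L > 0" by simp
    define x where "x = (1 / L) *\<^sub>R (f R - f B)"
    define y where "y = (\<lambda>n. (1 / L) *\<^sub>R (f B - f (T n)))"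
    define t where "t = 2 / L"
    have t: "0 < t" "t \<le> 2" using \<open>1 \<le> L\<close> unfolding t_def by (auto simp: divide_le_eq)
    have nx: "norm x \<le> 1" using ub[OF eRB] Lpos unfolding x_def by (simp add: divide_le_eq)
    have ny: "\<forall>n. norm (y n) \<le> 1" using ub[OF eBT] Lpos unfolding y_def by (simp add: divide_le_eq)
    have sep: "sep y \<ge> t" unfolding sep_def
    proof (rule cInf_greatest)
      show "{norm (y m - y n) | m n. m \<noteq> n} \<noteq> {}" proof -
        have "norm (y 0 - y 1) \<in> {norm (y m - y n) | m n. m \<noteq> n}" by force
        then show ?thesis by blast
      qed
    next
      fix z assume "z \<in> {norm (y m - y n) | m n. m \<noteq> n}"
      then obtain m n where mn: "m \<noteq> n" "z = norm (y m - y n)" by blast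
      have "y m - y n = (1 / L) *\<^sub>R (f (T n) - f (T m))"
        unfolding y_def by (simp add: algebra_simps)
      then have "z = norm (f (T n) - f (T m)) / L" using mn Lpos by simp
      moreover have "2 \<le> norm (f (T n) - f (T m))"
        using rho_TT[of n m] mn nc unfolding noncontractive_def
        by (metis dual_order.trans)
      ultimately show "t \<le> z" unfolding t_def using Lpos by (simp add: divide_right_mono)
    qed
    define SS where "SS = {(INF n. norm (x + y n) / 2) | (x::'a) y.
        norm x \<le> 1 \<and> (\<forall>n. norm (y n) \<le> 1) \<and> sep y \<ge> t}"
    have mem: "(INF n. norm (x + y n) / 2) \<in> SS" unfolding SS_def using nx ny sep by blast
    have bdd: "bdd_above (insert 0 SS)"
    proof (rule bdd_aboveI[of _ 1])
      fix z assume "z \<in> insert 0 SS"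
      then show "z \<le> 1"
      proof
        assume "z \<in> SS"
        then obtain x' :: 'a and y' :: "nat \<Rightarrow> 'a" where z: "z = (INF n. norm (x' + y' n) / 2)"
          "norm x' \<le> 1" "\<forall>n. norm (y' n) \<le> 1" unfolding SS_def by blast
        have "z \<le> norm (x' + y' 0) / 2" unfolding z(1)
          by (rule cINF_lower) (auto intro!: bdd_belowI[of _ 0])
        also have "\<dots> \<le> (norm x' + norm (y' 0)) / 2" by (simp add: norm_triangle_ineq divide_right_mono)
        also have "\<dots> \<le> 1" using add_mono[OF z(2) z(3)[rule_format, of 0]] by simp
        finally show ?thesis .
      qed simp
    qed
    have "(INF n. norm (x + y n) / 2) \<le> Sup (insert 0 SS)"
      using mem bdd by (intro cSup_upper) auto
    also have "Sup (insert 0 SS) = 1 - beta_bar TYPE('a) t"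
      unfolding beta_bar_def SS_def by simp
    also have "\<dots> \<le> 1 - c * t powr p" using c(2)[OF t] by simp
    finally have inf_le: "(INF n. norm (x + y n) / 2) \<le> 1 - c * t powr p" .
    define D where "D = norm (f R - f S)"
    have "(D - L) / (2 * L) \<le> (INF n. norm (x + y n) / 2)"
    proof (rule cINF_greatest)
      fix n
      have xy: "x + y n = (1 / L) *\<^sub>R (f R - f (T n))"
        unfolding x_def y_def by (simp add: algebra_simps)
      have "D \<le> norm (f R - f (T n)) + norm (f (T n) - f S)"
        unfolding D_def using norm_triangle_ineq[of "f R - f (T n)" "f (T n) - f S"] by simp
      also have "\<dots> \<le> norm (f R - f (T n)) + L" using ub[OF eTS] by simp
      finally have "D - L \<le> L * norm (x + y n)" using xy Lpos by simp
      then show "(D - L) / (2 * L) \<le> norm (x + y n) / 2" using Lpos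
        by (simp add: divide_le_eq field_simps)
    qed simp
    with inf_le have "(D - L) / (2 * L) \<le> 1 - c * t powr p" by linarith
    then have D: "D \<le> 3 * L - 2 * L * c * t powr p" using Lpos by (simp add: divide_le_eq field_simps)
    have "2 * L * c * t powr p = c * 2 powr (p + 1) / L powr (p - 1)"
    proof -
      have "t powr p = 2 powr p / L powr p" unfolding t_def using Lpos by (simp add: powr_divide)
      moreover have "L powr p = L * L powr (p - 1)"
        using Lpos by (simp add: powr_diff)
      moreover have "2 powr (p + 1) = 2 * 2 powr p" by (simp add: powr_add)
      moreover have "L powr (p - 1) > 0" using Lpos by simp
      ultimately show ?thesis using Lpos by (simp add: field_simps)
    qed
    then show ?thesis using D unfolding D_def L_def \<gamma>_def by (simp add: field_simps)
  qed
  ultimately show ?thesis by blast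
qed

end
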